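(* Let $X,Y$ be real normed linear spaces and $Z=X\oplus_1Y$. Then: (i) If $x\in X\setminus\{\theta\}$, then $(x,\theta)\in Z$ is not $\varepsilon$-smooth for any $\varepsilon\in[0,2)$. (ii) If $y\in Y\setminus\{\theta\}$, then $(\theta,y)\in Z$ is not $\varepsilon$-smooth for any $\varepsilon\in[0,2)$. (iii) If $x\in X\setminus\{\theta\}$ is $\varepsilon_x$-smooth and $y\in Y\setminus\{\theta\}$ is $\varepsilon_y$-smooth, with $\varepsilon_x,\varepsilon_y\in[0,2)$, then $(x,y)\in Z$ is $\varepsilon$-smooth with $\varepsilon=\max\{\varepsilon_x,\varepsilon_y\}$.
   Context: $X\oplus_1Y$ is $X\times Y$ with norm $\|x\|+\|y\|$. For a normed space $W$ and $w\neq\theta$, $J(w)=\{\phi\in S_{W^*}:\phi(w)=\|w\|\}$, and $w$ is $\delta$-smooth if $\sup_{\phi,\psi\in J(w)}\|\phi-\psi\|\le\delta$; "approximately smooth" means $\delta$-smooth for some $\delta\in[0,2)$. *)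

theory Defs
  imports "HOL-Analysis.Analysis"
begin

text \<open>A normed space is given by a real vector space type together with a norm
function N. The dual unit sphere, the support set J and delta-smoothness are
defined relative to N, so that they apply both to the library norm of a
real_normed_vector and to the 1-sum norm on a product.\<close>

definition bdd_functional :: "('v::real_vector \<Rightarrow> real) \<Rightarrow> ('v \<Rightarrow> real) \<Rightarrow> bool" where
  "bdd_functional N f \<longleftrightarrow> linear f \<and> (\<exists>K. \<forall>z. \<bar>f z\<bar> \<le> K * N z)"

definition fnorm :: "('v::real_vector \<Rightarrow> real) \<Rightarrow> ('v \<Rightarrow> real) \<Rightarrow> real" where
  "fnorm N f = Sup {\<bar>f z\<bar> | z. N z \<le> 1}"

definition supp_set :: "('v::real_vector \<Rightarrow> real) \<Rightarrow> 'v \<Rightarrow> ('v \<Rightarrow> real) set" where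
  "supp_set N w = {f. bdd_functional N f \<and> fnorm N f = 1 \<and> f w = N w}"

definition delta_smooth :: "('v::real_vector \<Rightarrow> real) \<Rightarrow> real \<Rightarrow> 'v \<Rightarrow> bool" where
  "delta_smooth N \<delta> w \<longleftrightarrow> w \<noteq> 0 \<and>
     (\<forall>f\<in>supp_set N w. \<forall>g\<in>supp_set N w. fnorm N (\<lambda>z. f z - g z) \<le> \<delta>)"

definition l1_norm :: "'a::real_normed_vector \<times> 'b::real_normed_vector \<Rightarrow> real" where
  "l1_norm p = norm (fst p) + norm (snd p)"

end

theory Submission
  imports Defs
begin


definition sublin :: "('v::real_vector \<Rightarrow> real) \<Rightarrow> bool" where
  "sublin q \<longleftrightarrow> (\<forall>a b. q (a + b) \<le> q a + q b) \<and> (\<forall>c z. 0 \<le> c \<longrightarrow> q (c *\<^sub>R z) = c * q z)"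

lemma sublin_add: "sublin q \<Longrightarrow> q (a + b) \<le> q a + q b"
  unfolding sublin_def by blast

lemma sublin_scale: "sublin q \<Longrightarrow> 0 \<le> c \<Longrightarrow> q (c *\<^sub>R z) = c * q z"
  unfolding sublin_def by blast

lemma sublin_zero: "sublin q \<Longrightarrow> q 0 = 0"
  using sublin_scale[of q 0 0] by simp

lemma sublin_neg: "sublin q \<Longrightarrow> - q (- z) \<le> q z"
  using sublin_add[of q z "-z"] sublin_zero[of q] by simp

lemma sublin_norm: "sublin (norm :: 'v::real_normed_vector \<Rightarrow> real)"
  unfolding sublin_def by (simp add: norm_triangle_ineq)

definition shiftinf :: "('v::real_vector \<Rightarrow> real) \<Rightarrow> 'v \<Rightarrow> 'v \<Rightarrow> real" where
  "shiftinf q y z = Inf {q (z + t *\<^sub>R y) - t * q y | t. 0 \<le> t}"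

lemma si_bdd: assumes "sublin q" shows "bdd_below {q (z + t *\<^sub>R y) - t * q y | t. 0 \<le> t}"
proof (rule bdd_belowI[where m = "- q (- z)"])
  fix w assume "w \<in> {q (z + t *\<^sub>R y) - t * q y | t. 0 \<le> t}"
  then obtain t where t: "0 \<le> t" "w = q (z + t *\<^sub>R y) - t * q y" by blast
  have "q (t *\<^sub>R y) \<le> q (z + t *\<^sub>R y) + q (- z)"
    using sublin_add[OF assms, of "z + t *\<^sub>R y" "-z"] by simp
  then show "- q (- z) \<le> w" using t sublin_scale[OF assms t(1), of y] by simp
qed

lemma si_lower: "sublin q \<Longrightarrow> 0 \<le> t \<Longrightarrow> shiftinf q y z \<le> q (z + t *\<^sub>R y) - t * q y"
  unfolding shiftinf_def by (rule cInf_lower[OF _ si_bdd]) auto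

lemma si_greatest: "(\<And>t. 0 \<le> t \<Longrightarrow> k \<le> q (z + t *\<^sub>R y) - t * q y) \<Longrightarrow> k \<le> shiftinf q y z"
  unfolding shiftinf_def by (rule cInf_greatest) auto

lemma si_le: "sublin q \<Longrightarrow> shiftinf q y z \<le> q z"
  using si_lower[of q 0 y z] by simp

lemma si_negy: "sublin q \<Longrightarrow> shiftinf q y (- y) \<le> - q y"
  using si_lower[of q 1 y "-y"] sublin_zero[of q] by simp

lemma si_homle: assumes q: "sublin q" and c: "0 < c"
  shows "shiftinf q y (c *\<^sub>R z) \<le> c * shiftinf q y z"
proof -
  have "shiftinf q y (c *\<^sub>R z) / c \<le> q (z + t *\<^sub>R y) - t * q y" if t: "0 \<le> t" for t
  proof -
    have "shiftinf q y (c *\<^sub>R z) \<le> q (c *\<^sub>R z + (c * t) *\<^sub>R y) - (c * t) * q y"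
      using si_lower[OF q] t c by simp
    also have "c *\<^sub>R z + (c * t) *\<^sub>R y = c *\<^sub>R (z + t *\<^sub>R y)" by (simp add: algebra_simps)
    also have "q (c *\<^sub>R (z + t *\<^sub>R y)) = c * q (z + t *\<^sub>R y)" using sublin_scale[OF q] c by simp
    finally have "shiftinf q y (c *\<^sub>R z) \<le> c * (q (z + t *\<^sub>R y) - t * q y)" by (simp add: algebra_simps)
    then show ?thesis using c by (simp add: divide_le_eq mult.commute)
  qed
  then have "shiftinf q y (c *\<^sub>R z) / c \<le> shiftinf q y z" by (rule si_greatest)
  then show ?thesis using c by (simp add: divide_le_eq mult.commute)
qed

lemma si_sublin: assumes q: "sublin q" shows "sublin (shiftinf q y)"
  unfolding sublin_def
proof (intro conjI allI impI)
  fix a b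
  have "shiftinf q y (a + b) - (q (b + t *\<^sub>R y) - t * q y) \<le> shiftinf q y a" if t: "0 \<le> t" for t
  proof (rule si_greatest)
    fix s :: real assume s: "0 \<le> s"
    have "shiftinf q y (a + b) \<le> q (a + b + (s + t) *\<^sub>R y) - (s + t) * q y"
      using si_lower[OF q] s t by simp
    also have "a + b + (s + t) *\<^sub>R y = (a + s *\<^sub>R y) + (b + t *\<^sub>R y)" by (simp add: algebra_simps)
    finally show "shiftinf q y (a + b) - (q (b + t *\<^sub>R y) - t * q y) \<le> q (a + s *\<^sub>R y) - s * q y"
      using sublin_add[OF q, of "a + s *\<^sub>R y" "b + t *\<^sub>R y"] by (simp add: algebra_simps)
  qed
  then have "shiftinf q y (a + b) - shiftinf q y a \<le> shiftinf q y b"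
    by (intro si_greatest) (simp add: algebra_simps)
  then show "shiftinf q y (a + b) \<le> shiftinf q y a + shiftinf q y b" by simp
next
  fix c :: real and z assume c: "0 \<le> c"
  show "shiftinf q y (c *\<^sub>R z) = c * shiftinf q y z"
  proof (cases "c = 0")
    case True
    have "shiftinf q y 0 \<le> 0" using si_le[OF q, of y 0] sublin_zero[OF q] by simp
    moreover have "0 \<le> shiftinf q y 0"
      by (rule si_greatest) (simp add: sublin_scale[OF q])
    ultimately show ?thesis using True by simp
  next
    case False
    then have c0: "0 < c" using c by simp
    have 1: "shiftinf q y (c *\<^sub>R z) \<le> c * shiftinf q y z" by (rule si_homle[OF q c0])
    have "shiftinf q y ((1/c) *\<^sub>R (c *\<^sub>R z)) \<le> (1/c) * shiftinf q y (c *\<^sub>R z)"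
      by (rule si_homle[OF q]) (use c0 in simp)
    then have "shiftinf q y z \<le> (1/c) * shiftinf q y (c *\<^sub>R z)" using c0 by simp
    then have "c * shiftinf q y z \<le> shiftinf q y (c *\<^sub>R z)" using c0
      by (simp add: le_divide_eq mult.commute)
    with 1 show ?thesis by simp
  qed
qed

definition chinf :: "('v \<Rightarrow> real) set \<Rightarrow> 'v \<Rightarrow> real" where
  "chinf C z = Inf ((\<lambda>c. c z) ` C)"

locale chn =
  fixes C :: "('v::real_vector \<Rightarrow> real) set" and p :: "'v \<Rightarrow> real"
  assumes ne: "C \<noteq> {}" and sub: "\<And>c. c \<in> C \<Longrightarrow> sublin c"
    and bnd: "\<And>c. c \<in> C \<Longrightarrow> c \<le> p"
    and tot: "\<And>c d. c \<in> C \<Longrightarrow> d \<in> C \<Longrightarrow> c \<le> d \<or> d \<le> c"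
begin

lemma bdd: "bdd_below ((\<lambda>c. c z) ` C)"
proof (rule bdd_belowI[where m = "- p (- z)"])
  fix w assume "w \<in> (\<lambda>c. c z) ` C"
  then obtain c where c: "c \<in> C" "w = c z" by blast
  have "c (- z) \<le> p (- z)" using bnd[OF c(1)] by (simp add: le_fun_def)
  then show "- p (-z) \<le> w" using sublin_neg[OF sub[OF c(1)], of z] c by simp
qed

lemma lower: "c \<in> C \<Longrightarrow> chinf C z \<le> c z"
  unfolding chinf_def by (rule cInf_lower[OF _ bdd]) auto

lemma greatest: "(\<And>c. c \<in> C \<Longrightarrow> k \<le> c z) \<Longrightarrow> k \<le> chinf C z"
  unfolding chinf_def using ne by (intro cInf_greatest) auto

lemma le_p: "chinf C \<le> p"
proof -
  obtain c where "c \<in> C" using ne by blast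
  then show ?thesis using lower bnd by (force simp: le_fun_def intro: order_trans)
qed

lemma homle: assumes k: "0 < k" shows "chinf C (k *\<^sub>R z) \<le> k * chinf C z"
proof -
  have "chinf C (k *\<^sub>R z) / k \<le> chinf C z"
  proof (rule greatest)
    fix c assume c: "c \<in> C"
    have "chinf C (k *\<^sub>R z) \<le> c (k *\<^sub>R z)" by (rule lower[OF c])
    also have "\<dots> = k * c z" using sublin_scale[OF sub[OF c], of k z] k by simp
    finally have "chinf C (k *\<^sub>R z) \<le> k * c z" .
    then show "chinf C (k *\<^sub>R z) / k \<le> c z" using k by (simp add: divide_le_eq mult.commute)
  qed
  then show ?thesis using k by (simp add: divide_le_eq mult.commute)
qed

lemma sublin_chinf: "sublin (chinf C)"
  unfolding sublin_def
proof (intro conjI allI impI)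
  fix a b
  have "chinf C (a + b) - c2 b \<le> chinf C a" if c2: "c2 \<in> C" for c2
  proof (rule greatest)
    fix c1 assume c1: "c1 \<in> C"
    have "chinf C (a + b) \<le> c1 a + c2 b"
    proof (cases "c1 \<le> c2")
      case True
      have "chinf C (a + b) \<le> c1 (a + b)" by (rule lower[OF c1])
      also have "\<dots> \<le> c1 a + c1 b" by (rule sublin_add[OF sub[OF c1]])
      also have "\<dots> \<le> c1 a + c2 b" using True by (simp add: le_fun_def)
      finally show ?thesis .
    next
      case False
      then have "c2 \<le> c1" using tot[OF c1 c2] by blast
      have "chinf C (a + b) \<le> c2 (a + b)" by (rule lower[OF c2])
      also have "\<dots> \<le> c2 a + c2 b" by (rule sublin_add[OF sub[OF c2]])
      also have "\<dots> \<le> c1 a + c2 b" using \<open>c2 \<le> c1\<close> by (simp add: le_fun_def)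
      finally show ?thesis .
    qed
    then show "chinf C (a + b) - c2 b \<le> c1 a" by simp
  qed
  then have "chinf C (a + b) - chinf C a \<le> chinf C b"
    by (intro greatest) (simp add: algebra_simps)
  then show "chinf C (a + b) \<le> chinf C a + chinf C b" by simp
next
  fix c :: real and z assume c: "0 \<le> c"
  show "chinf C (c *\<^sub>R z) = c * chinf C z"
  proof (cases "c = 0")
    case True
    obtain d where d: "d \<in> C" using ne by blast
    have "chinf C 0 \<le> 0" using lower[OF d, of 0] sublin_zero[OF sub[OF d]] by simp
    moreover have "0 \<le> chinf C 0"
      by (rule greatest) (simp add: sublin_zero[OF sub])
    ultimately show ?thesis using True by simp
  next
    case False
    then have c0: "0 < c" using c by simp
    have 1: "chinf C (c *\<^sub>R z) \<le> c * chinf C z" by (rule homle[OF c0])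
    have "chinf C ((1/c) *\<^sub>R (c *\<^sub>R z)) \<le> (1/c) * chinf C (c *\<^sub>R z)"
      by (rule homle) (use c0 in simp)
    then have "chinf C z \<le> (1/c) * chinf C (c *\<^sub>R z)" using c0 by simp
    then have "c * chinf C z \<le> chinf C (c *\<^sub>R z)" using c0
      by (simp add: le_divide_eq mult.commute)
    with 1 show ?thesis by simp
  qed
qed

end

lemma exists_linear_below:
  fixes p :: "'v::real_vector \<Rightarrow> real"
  assumes p: "sublin p"
  shows "\<exists>f. linear f \<and> (\<forall>z. f z \<le> p z)"
proof -
  define A where "A = {q. sublin q \<and> q \<le> p}"
  define P where "P = (\<lambda>a b :: 'v \<Rightarrow> real. b \<le> a)"
  have po: "partial_order_on A (relation_of P A)"
    unfolding partial_order_on_def preorder_on_def refl_on_def trans_on_def antisym_on_def relation_of_def P_def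
    by auto
  have "\<exists>m \<in> A. \<forall>a \<in> A. P m a \<longrightarrow> a = m"
  proof (rule predicate_Zorn[OF po])
    fix C assume C: "C \<in> Chains (relation_of P A)"
    have CA: "C \<subseteq> A" using C unfolding Chains_def relation_of_def by blast
    have tot: "c \<le> d \<or> d \<le> c" if "c \<in> C" "d \<in> C" for c d
      using C that unfolding Chains_def relation_of_def P_def by blast
    show "\<exists>u\<in>A. \<forall>a\<in>C. P a u"
    proof (cases "C = {}")
      case True
      then show ?thesis using p unfolding A_def by auto
    next
      case False
      interpret chn C p
        by unfold_locales (use False CA tot in \<open>auto simp: A_def\<close>)
      have "chinf C \<in> A" using sublin_chinf le_p unfolding A_def by auto
      moreover have "\<forall>a\<in>C. P a (chinf C)" unfolding P_def using lower by (auto simp: le_fun_def)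
      ultimately show ?thesis by blast
    qed
  qed
  then obtain m where m: "m \<in> A" and mmin: "\<And>a. a \<in> A \<Longrightarrow> a \<le> m \<Longrightarrow> a = m"
    unfolding P_def by blast
  have ms: "sublin m" and mp: "m \<le> p" using m unfolding A_def by auto
  have negm: "m (- y) \<le> - m y" for y
  proof -
    have "shiftinf m y \<le> p" using si_le[OF ms] mp unfolding le_fun_def
      using order_trans by blast
    then have "shiftinf m y \<in> A" using si_sublin[OF ms] unfolding A_def by blast
    moreover have "shiftinf m y \<le> m" using si_le[OF ms] by (simp add: le_fun_def)
    ultimately have "shiftinf m y = m" by (rule mmin)
    then show ?thesis using si_negy[OF ms, of y] by simp
  qed
  have negeq: "m (- y) = - m y" for y
    using negm[of y] sublin_neg[OF ms, of y] by simp
  have add: "m (a + b) = m a + m b" for a b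
  proof -
    have "m (- (a + b)) \<le> m (- a) + m (- b)" using sublin_add[OF ms, of "-a" "-b"] by (simp add: add.commute)
    moreover have "m (- (a + b)) = - m (a + b)" "m (- a) = - m a" "m (- b) = - m b" by (rule negeq)+
    ultimately show ?thesis using sublin_add[OF ms, of a b] by linarith
  qed
  have scale: "m (c *\<^sub>R z) = c * m z" for c z
  proof (cases "0 \<le> c")
    case True then show ?thesis by (rule sublin_scale[OF ms])
  next
    case False
    have "m (c *\<^sub>R z) = m (- ((- c) *\<^sub>R z))" by simp
    also have "\<dots> = - m ((- c) *\<^sub>R z)" by (rule negeq)
    also have "\<dots> = c * m z" using sublin_scale[OF ms, of "-c" z] False by simp
    finally show ?thesis .
  qed
  have "linear m" by (rule linearI) (simp_all add: add scale)
  moreover have "\<forall>z. m z \<le> p z" using mp by (simp add: le_fun_def)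
  ultimately show ?thesis by blast
qed

lemma hahn_banach_norm:
  fixes x :: "'v::real_normed_vector"
  shows "\<exists>f. linear f \<and> (\<forall>z. \<bar>f z\<bar> \<le> norm z) \<and> f x = norm x"
proof -
  obtain f where f: "linear f" and fle: "\<And>z. f z \<le> shiftinf norm x z"
    using exists_linear_below[OF si_sublin[OF sublin_norm, of x]] by blast
  have fn: "f z \<le> norm z" for z using fle[of z] si_le[OF sublin_norm, of x z] by simp
  have "\<bar>f z\<bar> \<le> norm z" for z
    using fn[of z] fn[of "-z"] linear_neg[OF f, of z] by simp
  moreover have "f x = norm x"
    using fle[of "-x"] si_negy[OF sublin_norm, of x] linear_neg[OF f, of x] fn[of x] by simp
  ultimately show ?thesis using f by blast
qed



lemma fnorm_eq:
  assumes "\<And>z. N z \<le> 1 \<Longrightarrow> \<bar>f z\<bar> \<le> c" and "N w \<le> 1" and "\<bar>f w\<bar> = c"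
  shows "fnorm N f = c"
  unfolding fnorm_def by (rule cSup_eq_maximum) (use assms in auto)

lemma fnorm_upper:
  assumes bf: "bdd_functional N f" and N0: "\<And>z. 0 \<le> N z" and z: "N z \<le> 1"
  shows "\<bar>f z\<bar> \<le> fnorm N f"
proof -
  obtain K where K: "\<And>z. \<bar>f z\<bar> \<le> K * N z" using bf unfolding bdd_functional_def by blast
  have "bdd_above {\<bar>f z\<bar> | z. N z \<le> 1}"
  proof (rule bdd_aboveI[where M = "\<bar>K\<bar>"])
    fix w assume "w \<in> {\<bar>f z\<bar> | z. N z \<le> 1}"
    then obtain u where u: "N u \<le> 1" "w = \<bar>f u\<bar>" by blast
    have "K * N u \<le> \<bar>K\<bar> * N u" using N0[of u] by (simp add: mult_right_mono)
    also have "\<dots> \<le> \<bar>K\<bar>" using u(1) N0[of u] by (simp add: mult_left_le)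
    finally show "w \<le> \<bar>K\<bar>" using K[of u] u by simp
  qed
  then show ?thesis unfolding fnorm_def by (rule cSup_upper[rotated]) (use z in blast)
qed

lemma fnorm_least:
  assumes "N 0 \<le> 1" and "\<And>z. N z \<le> 1 \<Longrightarrow> \<bar>f z\<bar> \<le> c"
  shows "fnorm N f \<le> c"
  unfolding fnorm_def by (rule cSup_least) (use assms in auto)

lemma fnorm_bound:
  assumes bf: "bdd_functional N f" and N0: "\<And>z. 0 \<le> N z"
    and Ns: "\<And>c z. N (c *\<^sub>R z) = \<bar>c\<bar> * N z" and Nz: "\<And>z. N z = 0 \<Longrightarrow> z = 0"
  shows "\<bar>f z\<bar> \<le> fnorm N f * N z"
proof (cases "N z = 0")
  case True
  then show ?thesis using Nz[OF True] bf linear_0[of f] unfolding bdd_functional_def by simp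
next
  case False
  then have pos: "0 < N z" using N0[of z] by simp
  have lin: "linear f" using bf unfolding bdd_functional_def by blast
  have "N ((1 / N z) *\<^sub>R z) = 1" using Ns pos by simp
  then have "\<bar>f ((1 / N z) *\<^sub>R z)\<bar> \<le> fnorm N f" using fnorm_upper[OF bf N0] by simp
  moreover have "f ((1 / N z) *\<^sub>R z) = f z / N z" using linear_scale[OF lin] by simp
  ultimately have "\<bar>f z\<bar> / N z \<le> fnorm N f" using pos by simp
  then show ?thesis using pos by (simp add: divide_le_eq)
qed

lemma l1_props:
  shows "0 \<le> l1_norm p" "l1_norm (c *\<^sub>R p) = \<bar>c\<bar> * l1_norm p"
    "l1_norm p = 0 \<Longrightarrow> p = 0"
  unfolding l1_norm_def
    apply simp
   apply (simp add: algebra_simps)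
  by (metis add_nonneg_eq_0_iff norm_ge_zero norm_eq_zero prod_eq_iff fst_zero snd_zero)

lemma lin_comb:
  fixes \<phi> :: "'a::real_vector \<Rightarrow> real" and \<psi> :: "'b::real_vector \<Rightarrow> real"
  assumes "linear \<phi>" "linear \<psi>"
  shows "linear (\<lambda>p. \<phi> (fst p) + s * \<psi> (snd p))"
  by (rule linearI) (simp_all add: linear_add[OF assms(1)] linear_add[OF assms(2)]
      linear_scale[OF assms(1)] linear_scale[OF assms(2)] algebra_simps)

lemma part1:
  fixes x :: "'a::real_normed_vector" and v0 :: "'b::real_normed_vector"
  assumes x: "x \<noteq> 0" and v0: "v0 \<noteq> 0" and e: "\<epsilon> < 2"
  shows "\<not> delta_smooth l1_norm \<epsilon> (x, 0::'b)"
proof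
  assume ds: "delta_smooth l1_norm \<epsilon> (x, 0::'b)"
  obtain \<phi> where \<phi>: "linear \<phi>" "\<And>z. \<bar>\<phi> z\<bar> \<le> norm z" "\<phi> x = norm x"
    using hahn_banach_norm[of x] by blast
  obtain \<psi> where \<psi>: "linear \<psi>" "\<And>z. \<bar>\<psi> z\<bar> \<le> norm z" "\<psi> v0 = norm v0"
    using hahn_banach_norm[of v0] by blast
  have memb: "(\<lambda>p. \<phi> (fst p) + s * \<psi> (snd p)) \<in> supp_set l1_norm (x, 0)" if s: "\<bar>s\<bar> = 1" for s
  proof -
    let ?f = "\<lambda>p. \<phi> (fst p) + s * \<psi> (snd p)"
    have bd: "\<bar>?f p\<bar> \<le> l1_norm p" for p
    proof -
      have "\<bar>?f p\<bar> \<le> \<bar>\<phi> (fst p)\<bar> + \<bar>s\<bar> * \<bar>\<psi> (snd p)\<bar>" by (simp add: abs_mult[symmetric])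
      also have "\<dots> \<le> l1_norm p" using \<phi>(2)[of "fst p"] \<psi>(2)[of "snd p"] s unfolding l1_norm_def by simp
      finally show ?thesis .
    qed
    have "bdd_functional l1_norm ?f" unfolding bdd_functional_def
      using lin_comb[OF \<phi>(1) \<psi>(1)] bd by (metis mult_1)
    moreover have "fnorm l1_norm ?f = 1"
    proof (rule fnorm_eq[where w = "((1 / norm x) *\<^sub>R x, 0)"])
      show "\<And>z. l1_norm z \<le> 1 \<Longrightarrow> \<bar>?f z\<bar> \<le> 1" using bd order_trans by blast
      show "l1_norm ((1 / norm x) *\<^sub>R x, 0::'b) \<le> 1" using x unfolding l1_norm_def by simp
      show "\<bar>?f ((1 / norm x) *\<^sub>R x, 0)\<bar> = 1"
        using x linear_scale[OF \<phi>(1)] \<phi>(3) linear_0[OF \<psi>(1)] by simp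
    qed
    moreover have "?f (x, 0) = l1_norm (x, 0::'b)"
      using \<phi>(3) linear_0[OF \<psi>(1)] unfolding l1_norm_def by simp
    ultimately show ?thesis unfolding supp_set_def by blast
  qed
  have "fnorm l1_norm (\<lambda>z. (\<phi> (fst z) + 1 * \<psi> (snd z)) - (\<phi> (fst z) + (-1) * \<psi> (snd z))) \<le> \<epsilon>"
  proof -
    have "\<forall>f\<in>supp_set l1_norm (x, 0::'b). \<forall>g\<in>supp_set l1_norm (x, 0::'b). fnorm l1_norm (\<lambda>z. f z - g z) \<le> \<epsilon>"
      using ds unfolding delta_smooth_def by blast
    from this[rule_format, OF memb[of 1] memb[of "-1"]] show ?thesis by simp
  qed
  moreover have "fnorm l1_norm (\<lambda>z. (\<phi> (fst z) + 1 * \<psi> (snd z)) - (\<phi> (fst z) + (-1) * \<psi> (snd z))) = 2"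
  proof (rule fnorm_eq[where w = "(0, (1 / norm v0) *\<^sub>R v0)"])
    show "\<bar>(\<phi> (fst z) + 1 * \<psi> (snd z)) - (\<phi> (fst z) + (-1) * \<psi> (snd z))\<bar> \<le> 2"
      if "l1_norm z \<le> 1" for z
    proof -
      have "\<bar>\<psi> (snd z)\<bar> \<le> 1" using that \<psi>(2)[of "snd z"] norm_ge_zero[of "fst z"]
        unfolding l1_norm_def by linarith
      then show ?thesis by (simp add: abs_mult)
    qed
    show "l1_norm (0::'a, (1 / norm v0) *\<^sub>R v0) \<le> 1" using v0 unfolding l1_norm_def by simp
    show "\<bar>(\<phi> (fst (0::'a, (1 / norm v0) *\<^sub>R v0)) + 1 * \<psi> (snd (0::'a, (1 / norm v0) *\<^sub>R v0)))
      - (\<phi> (fst (0::'a, (1 / norm v0) *\<^sub>R v0)) + (-1) * \<psi> (snd (0::'a, (1 / norm v0) *\<^sub>R v0)))\<bar> = 2"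
      using v0 linear_scale[OF \<psi>(1)] \<psi>(3) by simp
  qed
  ultimately show False using e by simp
qed

lemma lin_comb2:
  fixes \<phi> :: "'a::real_vector \<Rightarrow> real" and \<psi> :: "'b::real_vector \<Rightarrow> real"
  assumes "linear \<phi>" "linear \<psi>"
  shows "linear (\<lambda>p. s * \<phi> (fst p) + \<psi> (snd p))"
  by (rule linearI) (simp_all add: linear_add[OF assms(1)] linear_add[OF assms(2)]
      linear_scale[OF assms(1)] linear_scale[OF assms(2)] algebra_simps)

lemma part2:
  fixes y :: "'b::real_normed_vector" and u0 :: "'a::real_normed_vector"
  assumes y: "y \<noteq> 0" and u0: "u0 \<noteq> 0" and e: "\<epsilon> < 2"
  shows "\<not> delta_smooth l1_norm \<epsilon> (0::'a, y)"
proof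
  assume ds: "delta_smooth l1_norm \<epsilon> (0::'a, y)"
  obtain \<psi> where \<psi>: "linear \<psi>" "\<And>z. \<bar>\<psi> z\<bar> \<le> norm z" "\<psi> y = norm y"
    using hahn_banach_norm[of y] by blast
  obtain \<phi> where \<phi>: "linear \<phi>" "\<And>z. \<bar>\<phi> z\<bar> \<le> norm z" "\<phi> u0 = norm u0"
    using hahn_banach_norm[of u0] by blast
  have memb: "(\<lambda>p. s * \<phi> (fst p) + \<psi> (snd p)) \<in> supp_set l1_norm (0, y)" if s: "\<bar>s\<bar> = 1" for s
  proof -
    let ?f = "\<lambda>p. s * \<phi> (fst p) + \<psi> (snd p)"
    have bd: "\<bar>?f p\<bar> \<le> l1_norm p" for p
    proof -
      have "\<bar>?f p\<bar> \<le> \<bar>s\<bar> * \<bar>\<phi> (fst p)\<bar> + \<bar>\<psi> (snd p)\<bar>" by (simp add: abs_mult[symmetric])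
      also have "\<dots> \<le> l1_norm p" using \<phi>(2)[of "fst p"] \<psi>(2)[of "snd p"] s unfolding l1_norm_def by simp
      finally show ?thesis .
    qed
    have "bdd_functional l1_norm ?f" unfolding bdd_functional_def
      using lin_comb2[OF \<phi>(1) \<psi>(1)] bd by (metis mult_1)
    moreover have "fnorm l1_norm ?f = 1"
    proof (rule fnorm_eq[where w = "(0, (1 / norm y) *\<^sub>R y)"])
      show "\<And>z. l1_norm z \<le> 1 \<Longrightarrow> \<bar>?f z\<bar> \<le> 1" using bd order_trans by blast
      show "l1_norm (0::'a, (1 / norm y) *\<^sub>R y) \<le> 1" using y unfolding l1_norm_def by simp
      show "\<bar>?f (0, (1 / norm y) *\<^sub>R y)\<bar> = 1"
        using y linear_scale[OF \<psi>(1)] \<psi>(3) linear_0[OF \<phi>(1)] by simp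
    qed
    moreover have "?f (0, y) = l1_norm (0::'a, y)"
      using \<psi>(3) linear_0[OF \<phi>(1)] unfolding l1_norm_def by simp
    ultimately show ?thesis unfolding supp_set_def by blast
  qed
  have "fnorm l1_norm (\<lambda>z. (1 * \<phi> (fst z) + \<psi> (snd z)) - ((-1) * \<phi> (fst z) + \<psi> (snd z))) \<le> \<epsilon>"
  proof -
    have "\<forall>f\<in>supp_set l1_norm (0::'a, y). \<forall>g\<in>supp_set l1_norm (0::'a, y). fnorm l1_norm (\<lambda>z. f z - g z) \<le> \<epsilon>"
      using ds unfolding delta_smooth_def by blast
    from this[rule_format, OF memb[of 1] memb[of "-1"]] show ?thesis by simp
  qed
  moreover have "fnorm l1_norm (\<lambda>z. (1 * \<phi> (fst z) + \<psi> (snd z)) - ((-1) * \<phi> (fst z) + \<psi> (snd z))) = 2"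
  proof (rule fnorm_eq[where w = "((1 / norm u0) *\<^sub>R u0, 0)"])
    show "\<bar>(1 * \<phi> (fst z) + \<psi> (snd z)) - ((-1) * \<phi> (fst z) + \<psi> (snd z))\<bar> \<le> 2"
      if "l1_norm z \<le> 1" for z
    proof -
      have "\<bar>\<phi> (fst z)\<bar> \<le> 1" using that \<phi>(2)[of "fst z"] norm_ge_zero[of "snd z"]
        unfolding l1_norm_def by linarith
      then show ?thesis by (simp add: abs_mult)
    qed
    show "l1_norm ((1 / norm u0) *\<^sub>R u0, 0::'b) \<le> 1" using u0 unfolding l1_norm_def by simp
    show "\<bar>(1 * \<phi> (fst ((1 / norm u0) *\<^sub>R u0, 0::'b)) + \<psi> (snd ((1 / norm u0) *\<^sub>R u0, 0::'b)))
      - ((-1) * \<phi> (fst ((1 / norm u0) *\<^sub>R u0, 0::'b)) + \<psi> (snd ((1 / norm u0) *\<^sub>R u0, 0::'b)))\<bar> = 2"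
      using u0 linear_scale[OF \<phi>(1)] \<phi>(3) by simp
  qed
  ultimately show False using e by simp
qed

lemma restr:
  fixes x :: "'a::real_normed_vector" and y :: "'b::real_normed_vector"
  assumes f: "f \<in> supp_set l1_norm (x, y)" and x: "x \<noteq> 0" and y: "y \<noteq> 0"
  shows "(\<lambda>a. f (a, 0)) \<in> supp_set norm x" "(\<lambda>b. f (0, b)) \<in> supp_set norm y"
    "\<And>p. f p = f (fst p, 0) + f (0, snd p)"
proof -
  have bf: "bdd_functional l1_norm f" and fn: "fnorm l1_norm f = 1" and fw: "f (x, y) = l1_norm (x, y)"
    using f unfolding supp_set_def by auto
  have lin: "linear f" using bf unfolding bdd_functional_def by blast
  have bd: "\<bar>f p\<bar> \<le> l1_norm p" for p
    using fnorm_bound[OF bf l1_props(1) l1_props(2) l1_props(3), of p] fn by simp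
  show dec: "f p = f (fst p, 0) + f (0, snd p)" for p
  proof -
    have "p = (fst p, 0) + (0, snd p)" by simp
    then show ?thesis using linear_add[OF lin, of "(fst p, 0)" "(0, snd p)"] by metis
  qed
  have lin1: "linear (\<lambda>a. f (a, 0::'b))"
  proof (rule linearI)
    fix a b :: 'a
    have "(a + b, 0::'b) = (a, 0) + (b, 0)" by simp
    then show "f (a + b, 0::'b) = f (a, 0) + f (b, 0)" using linear_add[OF lin] by metis
  next
    fix c :: real and a :: 'a
    have "(c *\<^sub>R a, 0::'b) = c *\<^sub>R (a, 0)" by simp
    then show "f (c *\<^sub>R a, 0::'b) = c *\<^sub>R f (a, 0)" using linear_scale[OF lin] by metis
  qed
  have lin2: "linear (\<lambda>b. f (0::'a, b))"
  proof (rule linearI)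
    fix a b :: 'b
    have "(0::'a, a + b) = (0, a) + (0, b)" by simp
    then show "f (0::'a, a + b) = f (0, a) + f (0, b)" using linear_add[OF lin] by metis
  next
    fix c :: real and a :: 'b
    have "(0::'a, c *\<^sub>R a) = c *\<^sub>R (0, a)" by simp
    then show "f (0::'a, c *\<^sub>R a) = c *\<^sub>R f (0, a)" using linear_scale[OF lin] by metis
  qed
  have bd1: "\<bar>f (a, 0::'b)\<bar> \<le> norm a" for a using bd[of "(a, 0)"] unfolding l1_norm_def by simp
  have bd2: "\<bar>f (0::'a, b)\<bar> \<le> norm b" for b using bd[of "(0, b)"] unfolding l1_norm_def by simp
  have sum: "f (x, 0) + f (0, y) = norm x + norm y" using fw dec[of "(x, y)"] unfolding l1_norm_def by simp
  have fx: "f (x, 0) = norm x" using sum bd1[of x] bd2[of y] by linarith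
  have fy: "f (0, y) = norm y" using sum bd1[of x] bd2[of y] by linarith
  have "fnorm norm (\<lambda>a. f (a, 0::'b)) = 1"
  proof (rule fnorm_eq[where w = "(1 / norm x) *\<^sub>R x"])
    show "\<And>z. norm z \<le> 1 \<Longrightarrow> \<bar>f (z, 0::'b)\<bar> \<le> 1" using bd1 order_trans by blast
    show "norm ((1 / norm x) *\<^sub>R x) \<le> 1" using x by simp
    show "\<bar>f ((1 / norm x) *\<^sub>R x, 0::'b)\<bar> = 1"
      using linear_scale[OF lin1, of "1 / norm x" x] fx x by simp
  qed
  moreover have "bdd_functional norm (\<lambda>a. f (a, 0::'b))"
    unfolding bdd_functional_def using lin1 bd1 by (metis mult_1)
  ultimately show "(\<lambda>a. f (a, 0)) \<in> supp_set norm x" using fx unfolding supp_set_def by blast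
  have "fnorm norm (\<lambda>b. f (0::'a, b)) = 1"
  proof (rule fnorm_eq[where w = "(1 / norm y) *\<^sub>R y"])
    show "\<And>z. norm z \<le> 1 \<Longrightarrow> \<bar>f (0::'a, z)\<bar> \<le> 1" using bd2 order_trans by blast
    show "norm ((1 / norm y) *\<^sub>R y) \<le> 1" using y by simp
    show "\<bar>f (0::'a, (1 / norm y) *\<^sub>R y)\<bar> = 1"
      using linear_scale[OF lin2, of "1 / norm y" y] fy y by simp
  qed
  moreover have "bdd_functional norm (\<lambda>b. f (0::'a, b))"
    unfolding bdd_functional_def using lin2 bd2 by (metis mult_1)
  ultimately show "(\<lambda>b. f (0, b)) \<in> supp_set norm y" using fy unfolding supp_set_def by blast
qed

lemma diff_bdd:
  fixes x :: "'a::real_normed_vector"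
  assumes "f \<in> supp_set norm x" "g \<in> supp_set norm x"
  shows "\<bar>f z - g z\<bar> \<le> fnorm norm (\<lambda>z. f z - g z) * norm z"
proof (rule fnorm_bound)
  have bf: "bdd_functional norm f" "bdd_functional norm g" and fn: "fnorm norm f = 1" "fnorm norm g = 1"
    using assms unfolding supp_set_def by auto
  have lf: "linear f" "linear g" using bf unfolding bdd_functional_def by auto
  have "\<bar>f z - g z\<bar> \<le> 2 * norm z" for z
  proof -
    have "\<bar>f z\<bar> \<le> norm z" "\<bar>g z\<bar> \<le> norm z"
      using fnorm_bound[OF bf(1), of z] fnorm_bound[OF bf(2), of z] fn by simp_all
    then show ?thesis by linarith
  qed
  moreover have "linear (\<lambda>z. f z - g z)"
    by (rule linearI) (simp_all add: linear_add[OF lf(1)] linear_add[OF lf(2)]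
      linear_scale[OF lf(1)] linear_scale[OF lf(2)] algebra_simps)
  ultimately show "bdd_functional norm (\<lambda>z. f z - g z)" unfolding bdd_functional_def by blast
qed simp_all

lemma part3:
  fixes x :: "'a::real_normed_vector" and y :: "'b::real_normed_vector"
  assumes x: "x \<noteq> 0" and y: "y \<noteq> 0" and ex: "0 \<le> ex" and ey: "0 \<le> ey"
    and dx: "delta_smooth norm ex x" and dy: "delta_smooth norm ey y"
  shows "delta_smooth l1_norm (max ex ey) (x, y)"
  unfolding delta_smooth_def
proof (intro conjI ballI)
  show "(x, y) \<noteq> 0" using x by (simp add: zero_prod_def)
  fix f g assume f: "f \<in> supp_set l1_norm (x, y)" and g: "g \<in> supp_set l1_norm (x, y)"
  note rf = restr[OF f x y] and rg = restr[OF g x y]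
  have Fx: "fnorm norm (\<lambda>a. f (a, 0::'b) - g (a, 0)) \<le> ex"
  proof -
    have "\<forall>f\<in>supp_set norm x. \<forall>g\<in>supp_set norm x. fnorm norm (\<lambda>z. f z - g z) \<le> ex"
      using dx unfolding delta_smooth_def by blast
    from this[rule_format, OF rf(1) rg(1)] show ?thesis by simp
  qed
  have Fy: "fnorm norm (\<lambda>b. f (0::'a, b) - g (0, b)) \<le> ey"
  proof -
    have "\<forall>f\<in>supp_set norm y. \<forall>g\<in>supp_set norm y. fnorm norm (\<lambda>z. f z - g z) \<le> ey"
      using dy unfolding delta_smooth_def by blast
    from this[rule_format, OF rf(2) rg(2)] show ?thesis by simp
  qed
  show "fnorm l1_norm (\<lambda>z. f z - g z) \<le> max ex ey"
  proof (rule fnorm_least)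
    show "l1_norm (0::'a \<times> 'b) \<le> 1" unfolding l1_norm_def by simp
    fix z :: "'a \<times> 'b" assume z: "l1_norm z \<le> 1"
    have "\<bar>f z - g z\<bar> = \<bar>(f (fst z, 0) - g (fst z, 0)) + (f (0, snd z) - g (0, snd z))\<bar>"
      using rf(3)[of z] rg(3)[of z] by simp
    also have "\<dots> \<le> \<bar>f (fst z, 0) - g (fst z, 0)\<bar> + \<bar>f (0, snd z) - g (0, snd z)\<bar>" by (rule abs_triangle_ineq)
    also have "\<dots> \<le> ex * norm (fst z) + ey * norm (snd z)"
    proof -
      have "\<bar>f (fst z, 0) - g (fst z, 0)\<bar> \<le> ex * norm (fst z)"
        using diff_bdd[OF rf(1) rg(1), of "fst z"] Fx norm_ge_zero[of "fst z"]
        by (meson mult_right_mono order_trans)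
      moreover have "\<bar>f (0, snd z) - g (0, snd z)\<bar> \<le> ey * norm (snd z)"
        using diff_bdd[OF rf(2) rg(2), of "snd z"] Fy norm_ge_zero[of "snd z"]
        by (meson mult_right_mono order_trans)
      ultimately show ?thesis by linarith
    qed
    also have "\<dots> \<le> max ex ey * norm (fst z) + max ex ey * norm (snd z)"
      by (intro add_mono mult_right_mono) auto
    also have "\<dots> = max ex ey * l1_norm z" unfolding l1_norm_def by (simp add: algebra_simps)
    also have "\<dots> \<le> max ex ey" using z ex by (simp add: mult_left_le)
    finally show "\<bar>f z - g z\<bar> \<le> max ex ey" .
  qed
qed

theorem theorem6p4:
  fixes x :: "'a::real_normed_vector" and y :: "'b::real_normed_vector"
  assumes nontriv_X: "\<exists>u::'a. u \<noteq> 0"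
      and nontriv_Y: "\<exists>v::'b. v \<noteq> 0"
  shows "(x \<noteq> 0 \<longrightarrow> (\<forall>\<epsilon>. 0 \<le> \<epsilon> \<and> \<epsilon> < 2 \<longrightarrow> \<not> delta_smooth l1_norm \<epsilon> (x, 0::'b)))
       \<and> (y \<noteq> 0 \<longrightarrow> (\<forall>\<epsilon>. 0 \<le> \<epsilon> \<and> \<epsilon> < 2 \<longrightarrow> \<not> delta_smooth l1_norm \<epsilon> (0::'a, y)))
       \<and> (\<forall>\<epsilon>x \<epsilon>y. x \<noteq> 0 \<and> y \<noteq> 0 \<and> 0 \<le> \<epsilon>x \<and> \<epsilon>x < 2 \<and> 0 \<le> \<epsilon>y \<and> \<epsilon>y < 2
            \<and> delta_smooth norm \<epsilon>x x \<and> delta_smooth norm \<epsilon>y y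
            \<longrightarrow> delta_smooth l1_norm (max \<epsilon>x \<epsilon>y) (x, y))"
proof (intro conjI allI impI)
  fix \<epsilon> :: real assume "x \<noteq> 0" "0 \<le> \<epsilon> \<and> \<epsilon> < 2"
  moreover obtain v :: 'b where "v \<noteq> 0" using nontriv_Y by blast
  ultimately show "\<not> delta_smooth l1_norm \<epsilon> (x, 0::'b)" using part1 by blast
next
  fix \<epsilon> :: real assume "y \<noteq> 0" "0 \<le> \<epsilon> \<and> \<epsilon> < 2"
  moreover obtain u :: 'a where "u \<noteq> 0" using nontriv_X by blast
  ultimately show "\<not> delta_smooth l1_norm \<epsilon> (0::'a, y)" using part2 by blast
next
  fix ex ey :: real
  assume "x \<noteq> 0 \<and> y \<noteq> 0 \<and> 0 \<le> ex \<and> ex < 2 \<and> 0 \<le> ey \<and> ey < 2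
            \<and> delta_smooth norm ex x \<and> delta_smooth norm ey y"
  then show "delta_smooth l1_norm (max ex ey) (x, y)" using part3 by blast
qed

end
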